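(* Let $g = e^{2\lambda}(\hat v+\hat h)$ be a spacetime metric conformal to a 2+2 product, let $U$ be the canonical 2-form of its principal structure, and let $a\equiv -{*U}(\nabla\cdot *U)$, $b\equiv U(\nabla\cdot U)$. Then the metric is: of class $\binom{0}{0}$ iff $a=b=0$ iff $\lambda$ is constant ($d\lambda = 0$); of class $\binom{0}{1}$ iff $a=0$, $b\neq 0$ iff $d\lambda$ lies on the time-like principal plane ($d\lambda\neq 0$, $*U(d\lambda)=0$); of class $\binom{1}{0}$ iff $a\neq 0$, $b=0$ iff $d\lambda$ lies on the space-like principal plane ($d\lambda\neq0$, $U(d\lambda)=0$); of class $\binom{1}{1}$ iff $a\neq0$, $b\neq 0$ iff $d\lambda$ does not lie on a principal plane ($U(d\lambda)\neq 0$, $*U(d\lambda)\neq 0$).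
   Context: A spacetime is a 4-dimensional oriented Lorentzian manifold $(M,g)$ of signature $(-,+,+,+)$, Levi-Civita connection $\nabla$, volume element $\eta$; statements are local. $g$ is conformal to a 2+2 product: $g = e^{2\lambda}(\hat v+\hat h)$ where in suitable local coordinates $\hat v = \hat v_{ij}(x^1,x^2)dx^idx^j$ is a 2-dimensional Lorentzian metric and $\hat h = \hat h_{AB}(x^3,x^4)dx^Adx^B$ a 2-dimensional Riemannian metric. The principal structure is $(v,h)$ with $v = e^{2\lambda}\hat v$ (the $g$-orthogonal projector onto the time-like principal plane $V$) and $h = e^{2\lambda}\hat h = g-v$ (projector onto the space-like principal plane $H$); the canonical 2-form $U$ is the unit volume element of $V$, so $U^2 = v$, $\tr U^2=2$, and $-( *U)^2 = h$. Conventions: $(A\cdot B)^\alpha{}_\beta=A^\alpha{}_\mu B^\mu{}_\beta$, $A(x)^\alpha = A^\alpha{}_\beta x^\beta$, $( *U)_{\alpha\beta}=\frac12\eta_{\alpha\beta\mu\nu}U^{\mu\nu}$, $(\nabla\cdot A)_\beta = \nabla_\alpha A^\alpha{}_\beta$. Second fundamental form of $V$: $Q_v(x,y) = h(\nabla_{v(x)}v(y))$; its symmetric part $S_v(x,y)=\frac12(Q_v(x,y)+Q_v(y,x))$ has trace $\tr S_v = g^{\alpha\beta}S_v(e_\alpha,e_\beta)$ (a vector); $V$ is minimal iff $\tr S_v = 0$; analogously for $H$ with $Q_h(x,y)=v(\nabla_{h(x)}h(y))$. Classes: $\binom00$ both principal planes minimal; $\binom01$ time-like plane minimal and space-like not;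 $\binom10$ space-like plane minimal and time-like not; $\binom11$ neither minimal. *)

theory Defs
  imports "HOL-Analysis.Analysis"
begin

text \<open>Points of the coordinate domain are vectors
  p :: real^4 with coordinates p$1, p$2 (time-like block) and p$3, p$4 (space-like
  block). Indices range over the 4-element type 4; the numerals 1,2,3,4 denote the
  coordinate indices (4 = 0 in that type, which is harmless). A (1,1)-tensor field
  T is stored as T a b p = T^a_b(p); a covariant 2-tensor field F as F a b p = F_ab(p);
  a covector field w as w c p = w_c(p); a vector field as X :: real^4 => real^4.\<close>

type_synonym scal = "real^4 \<Rightarrow> real"
type_synonym vfield = "real^4 \<Rightarrow> real^4"
type_synonym covec = "4 \<Rightarrow> real^4 \<Rightarrow> real"
type_synonym tens2 = "4 \<Rightarrow> 4 \<Rightarrow> real^4 \<Rightarrow> real"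

definition pd :: "4 \<Rightarrow> scal \<Rightarrow> scal" where
  "pd i f x = deriv (\<lambda>t. f (x + t *\<^sub>R axis i 1)) 0"

fun iter_pd :: "4 list \<Rightarrow> scal \<Rightarrow> scal" where
  "iter_pd [] f = f"
| "iter_pd (i # is) f = pd i (iter_pd is f)"

definition smooth_on :: "(real^4) set \<Rightarrow> scal \<Rightarrow> bool" where
  "smooth_on S f \<longleftrightarrow> (\<forall>is x. x \<in> S \<longrightarrow> iter_pd is f differentiable (at x))"

definition gmat :: "tens2 \<Rightarrow> real^4 \<Rightarrow> real^4^4" where
  "gmat g p = (\<chi> i j. g i j p)"

definition ginv :: "tens2 \<Rightarrow> tens2" where
  "ginv g a b p = matrix_inv (gmat g p) $ a $ b"

definition christ :: "tens2 \<Rightarrow> 4 \<Rightarrow> 4 \<Rightarrow> 4 \<Rightarrow> scal" where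
  "christ g a b c p =
     (\<Sum>d\<in>UNIV. ginv g a d p * (pd b (g d c) p + pd c (g d b) p - pd d (g b c) p)) / 2"

definition cov :: "tens2 \<Rightarrow> vfield \<Rightarrow> vfield \<Rightarrow> vfield" where
  "cov g X Y p = (\<chi> a. (\<Sum>b\<in>UNIV. X p $ b * pd b (\<lambda>q. Y q $ a) p)
                     + (\<Sum>b\<in>UNIV. \<Sum>c\<in>UNIV. christ g a b c p * X p $ b * Y p $ c))"

definition raise1 :: "tens2 \<Rightarrow> tens2 \<Rightarrow> tens2" where
  "raise1 g F a b p = (\<Sum>c\<in>UNIV. ginv g a c p * F c b p)"

definition app :: "tens2 \<Rightarrow> vfield \<Rightarrow> vfield" where
  "app A X p = (\<chi> a. \<Sum>b\<in>UNIV. A a b p * X p $ b)"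

definition appc :: "tens2 \<Rightarrow> tens2 \<Rightarrow> covec \<Rightarrow> vfield" where
  "appc g A w p = (\<chi> a. \<Sum>b\<in>UNIV. \<Sum>c\<in>UNIV. A a b p * ginv g b c p * w c p)"

definition coordf :: "4 \<Rightarrow> vfield" where
  "coordf i p = axis i 1"

text \<open>Second fundamental form Q_P(x,y) = R(nabla_{P x} P y), where P is the projector onto
  the plane and R the projector onto its orthogonal complement; trace of its symmetric part.\<close>
definition Qform :: "tens2 \<Rightarrow> tens2 \<Rightarrow> tens2 \<Rightarrow> vfield \<Rightarrow> vfield \<Rightarrow> vfield" where
  "Qform g P R X Y = app R (cov g (app P X) (app P Y))"

definition Sform :: "tens2 \<Rightarrow> tens2 \<Rightarrow> tens2 \<Rightarrow> vfield \<Rightarrow> vfield \<Rightarrow> vfield" where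
  "Sform g P R X Y p = (1/2) *\<^sub>R (Qform g P R X Y p + Qform g P R Y X p)"

definition trS :: "tens2 \<Rightarrow> tens2 \<Rightarrow> tens2 \<Rightarrow> vfield" where
  "trS g P R p = (\<Sum>\<alpha>\<in>UNIV. \<Sum>\<beta>\<in>UNIV. ginv g \<alpha> \<beta> p *\<^sub>R Sform g P R (coordf \<alpha>) (coordf \<beta>) p)"

definition divT :: "tens2 \<Rightarrow> tens2 \<Rightarrow> covec" where
  "divT g A b p = (\<Sum>a\<in>UNIV. pd a (A a b) p)
      + (\<Sum>a\<in>UNIV. \<Sum>c\<in>UNIV. christ g a a c p * A c b p)
      - (\<Sum>a\<in>UNIV. \<Sum>c\<in>UNIV. christ g c a b p * A a c p)"

definition ipos :: "4 \<Rightarrow> int" where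
  "ipos a = (if a = 1 then 1 else if a = 2 then 2 else if a = 3 then 3 else 4)"

definition lcsym :: "4 \<Rightarrow> 4 \<Rightarrow> 4 \<Rightarrow> 4 \<Rightarrow> real" where
  "lcsym a b c d = of_int (sgn (ipos b - ipos a) * sgn (ipos c - ipos a) * sgn (ipos d - ipos a)
                         * sgn (ipos c - ipos b) * sgn (ipos d - ipos b) * sgn (ipos d - ipos c))"

definition vol :: "tens2 \<Rightarrow> 4 \<Rightarrow> 4 \<Rightarrow> 4 \<Rightarrow> 4 \<Rightarrow> scal" where
  "vol g a b c d p = sqrt \<bar>det (gmat g p)\<bar> * lcsym a b c d"

definition hodge :: "tens2 \<Rightarrow> tens2 \<Rightarrow> tens2" where
  "hodge g F a b p = (\<Sum>\<mu>\<in>UNIV. \<Sum>\<nu>\<in>UNIV. vol g a b \<mu> \<nu> p *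
        (\<Sum>\<alpha>\<in>UNIV. \<Sum>\<beta>\<in>UNIV. ginv g \<mu> \<alpha> p * ginv g \<nu> \<beta> p * F \<alpha> \<beta> p)) / 2"

definition tl :: "4 \<Rightarrow> bool" where "tl i \<longleftrightarrow> i = 1 \<or> i = 2"
definition sp :: "4 \<Rightarrow> bool" where "sp i \<longleftrightarrow> i = 3 \<or> i = 4"

text \<open>vh i j x1 x2 = hat v_ij(x1,x2) (i,j in {1,2}); hh A B x3 x4 = hat h_AB(x3,x4) (A,B in {3,4}).\<close>
definition ghat :: "(4 \<Rightarrow> 4 \<Rightarrow> real \<Rightarrow> real \<Rightarrow> real) \<Rightarrow> (4 \<Rightarrow> 4 \<Rightarrow> real \<Rightarrow> real \<Rightarrow> real) \<Rightarrow> tens2" where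
  "ghat vh hh i j p = (if tl i \<and> tl j then vh i j (p$1) (p$2)
                       else if sp i \<and> sp j then hh i j (p$3) (p$4) else 0)"

definition gconf :: "scal \<Rightarrow> (4 \<Rightarrow> 4 \<Rightarrow> real \<Rightarrow> real \<Rightarrow> real) \<Rightarrow> (4 \<Rightarrow> 4 \<Rightarrow> real \<Rightarrow> real \<Rightarrow> real) \<Rightarrow> tens2" where
  "gconf lam vh hh i j p = exp (2 * lam p) * ghat vh hh i j p"

definition vcov :: "scal \<Rightarrow> (4 \<Rightarrow> 4 \<Rightarrow> real \<Rightarrow> real \<Rightarrow> real) \<Rightarrow> tens2" where
  "vcov lam vh i j p = (if tl i \<and> tl j then exp (2 * lam p) * vh i j (p$1) (p$2) else 0)"

definition hcov :: "scal \<Rightarrow> (4 \<Rightarrow> 4 \<Rightarrow> real \<Rightarrow> real \<Rightarrow> real) \<Rightarrow> tens2" where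
  "hcov lam hh i j p = (if sp i \<and> sp j then exp (2 * lam p) * hh i j (p$3) (p$4) else 0)"

definition vproj where "vproj lam vh hh = raise1 (gconf lam vh hh) (vcov lam vh)"
definition hproj where "hproj lam vh hh = raise1 (gconf lam vh hh) (hcov lam hh)"

text \<open>Canonical 2-form U (covariant): unit volume element of V, U = sqrt|det v_ij| dx1 wedge dx2.\<close>
definition Ucov :: "scal \<Rightarrow> (4 \<Rightarrow> 4 \<Rightarrow> real \<Rightarrow> real \<Rightarrow> real) \<Rightarrow> tens2" where
  "Ucov lam vh a b p =
     (let s = sqrt \<bar>vcov lam vh 1 1 p * vcov lam vh 2 2 p - vcov lam vh 1 2 p * vcov lam vh 2 1 p\<bar>
      in if a = 1 \<and> b = 2 then s else if a = 2 \<and> b = 1 then - s else 0)"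

definition Umix where "Umix lam vh hh = raise1 (gconf lam vh hh) (Ucov lam vh)"
definition sUmix where
  "sUmix lam vh hh = raise1 (gconf lam vh hh) (hodge (gconf lam vh hh) (Ucov lam vh))"

definition afield :: "scal \<Rightarrow> (4 \<Rightarrow> 4 \<Rightarrow> real \<Rightarrow> real \<Rightarrow> real) \<Rightarrow> (4 \<Rightarrow> 4 \<Rightarrow> real \<Rightarrow> real \<Rightarrow> real) \<Rightarrow> vfield" where
  "afield lam vh hh p = - appc (gconf lam vh hh) (sUmix lam vh hh)
                          (divT (gconf lam vh hh) (sUmix lam vh hh)) p"

definition bfield :: "scal \<Rightarrow> (4 \<Rightarrow> 4 \<Rightarrow> real \<Rightarrow> real \<Rightarrow> real) \<Rightarrow> (4 \<Rightarrow> 4 \<Rightarrow> real \<Rightarrow> real \<Rightarrow> real) \<Rightarrow> vfield" where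
  "bfield lam vh hh p = appc (gconf lam vh hh) (Umix lam vh hh)
                          (divT (gconf lam vh hh) (Umix lam vh hh)) p"

definition dlam :: "scal \<Rightarrow> real^4 \<Rightarrow> real^4" where
  "dlam lam p = (\<chi> c. pd c lam p)"

definition U_dlam where
  "U_dlam lam vh hh p = appc (gconf lam vh hh) (Umix lam vh hh) (\<lambda>c. pd c lam) p"
definition sU_dlam where
  "sU_dlam lam vh hh p = appc (gconf lam vh hh) (sUmix lam vh hh) (\<lambda>c. pd c lam) p"

definition V_minimal where
  "V_minimal Om lam vh hh \<longleftrightarrow>
     (\<forall>p\<in>Om. trS (gconf lam vh hh) (vproj lam vh hh) (hproj lam vh hh) p = 0)"
definition H_minimal where
  "H_minimal Om lam vh hh \<longleftrightarrow>
     (\<forall>p\<in>Om. trS (gconf lam vh hh) (hproj lam vh hh) (vproj lam vh hh) p = 0)"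

definition class00 where "class00 Om lam vh hh \<longleftrightarrow> V_minimal Om lam vh hh \<and> H_minimal Om lam vh hh"
definition class01 where "class01 Om lam vh hh \<longleftrightarrow> V_minimal Om lam vh hh \<and> \<not> H_minimal Om lam vh hh"
definition class10 where "class10 Om lam vh hh \<longleftrightarrow> \<not> V_minimal Om lam vh hh \<and> H_minimal Om lam vh hh"
definition class11 where "class11 Om lam vh hh \<longleftrightarrow> \<not> V_minimal Om lam vh hh \<and> \<not> H_minimal Om lam vh hh"

end

theory Submission
  imports Defs
begin


lemma tl_simps[simp]: "tl 1" "tl 2" "\<not> tl 3" "\<not> tl 4" "sp 3" "sp 4" "\<not> sp 1" "\<not> sp 2"
  by (simp_all add: tl_def sp_def)

lemma line_has_deriv:
  assumes "f differentiable (at x)"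
  shows "((\<lambda>t. f (x + t *\<^sub>R axis i 1)) has_real_derivative pd i f x) (at 0)"
proof -
  obtain f' where f': "(f has_derivative f') (at x)" using assms differentiable_def by blast
  have l: "((\<lambda>t::real. x + t *\<^sub>R axis i 1) has_derivative (\<lambda>t. t *\<^sub>R axis i (1::real))) (at 0)"
    by (auto intro!: derivative_eq_intros)
  have f'': "(f has_derivative f') (at (x + 0 *\<^sub>R axis i 1))" using f' by simp
  have c: "((\<lambda>t. f (x + t *\<^sub>R axis i 1)) has_derivative (\<lambda>t. f' (t *\<^sub>R axis i 1))) (at 0)"
    using diff_chain_at[OF l f''] by (simp add: o_def)
  have lin: "linear f'" using f' has_derivative_linear by blast
  have eq: "(\<lambda>t. f' (t *\<^sub>R axis i 1)) = (*) (f' (axis i 1))"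
    using linear_scale[OF lin] by (auto simp: mult.commute)
  have d: "((\<lambda>t. f (x + t *\<^sub>R axis i 1)) has_real_derivative f' (axis i 1)) (at 0)"
    using c unfolding eq by (simp add: has_field_derivative_def)
  then have "pd i f x = f' (axis i 1)" unfolding pd_def by (rule DERIV_imp_deriv)
  with d show ?thesis by simp
qed

lemma pd_eqI:
  assumes "((\<lambda>t. f (x + t *\<^sub>R axis i 1)) has_real_derivative D) (at 0)"
  shows "pd i f x = D"
  unfolding pd_def using assms by (rule DERIV_imp_deriv)

lemma pd_const_line:
  assumes "\<And>t. f (x + t *\<^sub>R axis i 1) = c"
  shows "pd i f x = 0"
  by (rule pd_eqI) (simp add: assms)

lemma pd_local:
  assumes "open S" "x \<in> S" "\<And>y. y \<in> S \<Longrightarrow> f y = g y"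
  shows "pd i f x = pd i g x"
proof -
  have "open ((\<lambda>t::real. x + t *\<^sub>R axis i 1) -` S)"
    by (rule open_vimage[OF assms(1)]) (auto intro!: continuous_intros)
  moreover have "0 \<in> (\<lambda>t::real. x + t *\<^sub>R axis i 1) -` S" using assms(2) by simp
  ultimately have "\<forall>\<^sub>F t in nhds 0. (\<lambda>t::real. x + t *\<^sub>R axis i 1) t \<in> S"
    using eventually_nhds by blast
  then have "\<forall>\<^sub>F t in nhds 0. f (x + t *\<^sub>R axis i 1) = g (x + t *\<^sub>R axis i 1)"
    by eventually_elim (simp add: assms(3))
  then show ?thesis unfolding pd_def by (rule deriv_cong_ev) simp
qed

lemma four_cases: "(x::4) = 1 \<or> x = 2 \<or> x = 3 \<or> x = 4" by (rule exhaust_4)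

lemma num4_neq[simp]: "(1::4) \<noteq> 2" "(1::4) \<noteq> 3" "(1::4) \<noteq> 4" "(2::4) \<noteq> 1" "(2::4) \<noteq> 3" "(2::4) \<noteq> 4"
  "(3::4) \<noteq> 1" "(3::4) \<noteq> 2" "(3::4) \<noteq> 4" "(4::4) \<noteq> 1" "(4::4) \<noteq> 2" "(4::4) \<noteq> 3" by simp_all

locale P8 =
  fixes A B :: "(real \<times> real) set"
    and lam :: "real^4 \<Rightarrow> real"
    and vh hh :: "4 \<Rightarrow> 4 \<Rightarrow> real \<Rightarrow> real \<Rightarrow> real"
    and Om :: "(real^4) set"
  assumes openA: "open A" and openB: "open B"
    and Om_def: "Om = {p. (p$1, p$2) \<in> A \<and> (p$3, p$4) \<in> B}"
    and vh_lor: "\<And>x y. (x, y) \<in> A \<Longrightarrow>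
           vh 1 2 x y = vh 2 1 x y \<and> vh 1 1 x y * vh 2 2 x y - (vh 1 2 x y)^2 < 0"
    and hh_riem: "\<And>x y. (x, y) \<in> B \<Longrightarrow>
           hh 3 4 x y = hh 4 3 x y \<and> hh 3 3 x y > 0 \<and> hh 3 3 x y * hh 4 4 x y - (hh 3 4 x y)^2 > 0"
    and smooth_ghat: "\<And>i j. smooth_on Om (ghat vh hh i j)"
    and smooth_lam: "smooth_on Om lam"
begin

lemma openOm: "open Om"
proof -
  have "Om = (\<lambda>p. (p$1, p$2)) -` A \<inter> (\<lambda>p. (p$3, p$4)) -` B" by (auto simp: Om_def)
  moreover have "open ((\<lambda>p::real^4. (p$1, p$2)) -` A)"
    by (rule open_vimage[OF openA]) (auto intro!: continuous_intros)
  moreover have "open ((\<lambda>p::real^4. (p$3, p$4)) -` B)"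
    by (rule open_vimage[OF openB]) (auto intro!: continuous_intros)
  ultimately show ?thesis by auto
qed

definition "vv i j p = vh i j (p$1) (p$2)"
definition "hv i j p = hh i j (p$3) (p$4)"
definition "Dv p = vv 1 1 p * vv 2 2 p - vv 1 2 p * vv 1 2 p"
definition "Hv p = hv 3 3 p * hv 4 4 p - hv 3 4 p * hv 3 4 p"
definition "EE p = exp (2 * lam p)"

lemma vv21: "p \<in> Om \<Longrightarrow> vv 2 1 p = vv 1 2 p"
  using vh_lor by (auto simp: Om_def vv_def)
lemma hv43: "p \<in> Om \<Longrightarrow> hv 4 3 p = hv 3 4 p"
  using hh_riem by (auto simp: Om_def hv_def)
lemma Dv_neg: assumes "p \<in> Om" shows "Dv p < 0"
proof -
  have "(p$1,p$2) \<in> A" using assms by (auto simp: Om_def)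
  from vh_lor[OF this] show ?thesis unfolding vv_def Dv_def power2_eq_square by linarith
qed
lemma Hv_pos: assumes "p \<in> Om" shows "Hv p > 0"
proof -
  have "(p$3,p$4) \<in> B" using assms by (auto simp: Om_def)
  from hh_riem[OF this] show ?thesis unfolding hv_def Hv_def power2_eq_square by linarith
qed
lemma EE_pos: "EE p > 0" by (simp add: EE_def)

lemma ghat_vals: "p \<in> Om \<Longrightarrow>
  ghat vh hh 1 1 p = vv 1 1 p \<and> ghat vh hh 1 2 p = vv 1 2 p \<and> ghat vh hh 2 1 p = vv 1 2 p \<and> ghat vh hh 2 2 p = vv 2 2 p \<and>
  ghat vh hh 3 3 p = hv 3 3 p \<and> ghat vh hh 3 4 p = hv 3 4 p \<and> ghat vh hh 4 3 p = hv 3 4 p \<and> ghat vh hh 4 4 p = hv 4 4 p \<and>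
  ghat vh hh 1 3 p = 0 \<and> ghat vh hh 1 4 p = 0 \<and> ghat vh hh 2 3 p = 0 \<and> ghat vh hh 2 4 p = 0 \<and>
  ghat vh hh 3 1 p = 0 \<and> ghat vh hh 4 1 p = 0 \<and> ghat vh hh 3 2 p = 0 \<and> ghat vh hh 4 2 p = 0"
  using vv21[of p] hv43[of p] by (simp add: ghat_def vv_def hv_def)

definition Gi :: "4 \<Rightarrow> 4 \<Rightarrow> real^4 \<Rightarrow> real" where "Gi i j p =
  (if i = 1 \<and> j = 1 then vv 2 2 p / Dv p else if i = 1 \<and> j = 2 then - vv 1 2 p / Dv p
   else if i = 2 \<and> j = 1 then - vv 1 2 p / Dv p else if i = 2 \<and> j = 2 then vv 1 1 p / Dv p
   else if i = 3 \<and> j = 3 then hv 4 4 p / Hv p else if i = 3 \<and> j = 4 then - hv 3 4 p / Hv p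
   else if i = 4 \<and> j = 3 then - hv 3 4 p / Hv p else if i = 4 \<and> j = 4 then hv 3 3 p / Hv p else 0)"

lemma ginv_eq: assumes p: "p \<in> Om"
  shows "ginv (gconf lam vh hh) i j p = Gi i j p / EE p"
proof -
  let ?M = "gmat (gconf lam vh hh) p"
  let ?N = "(\<chi> i j. Gi i j p / EE p) :: real^4^4"
  have D: "Dv p \<noteq> 0" "Hv p \<noteq> 0" using Dv_neg[OF p] Hv_pos[OF p] by auto
  have E: "EE p \<noteq> 0" using EE_pos[of p] by auto
  have gv: "\<And>i j. ?M $ i $ j = EE p * ghat vh hh i j p"
    by (simp add: gmat_def gconf_def EE_def)
  have 1: "?M ** ?N = mat 1"
    unfolding vec_eq_iff matrix_matrix_mult_def
    apply (simp add: gv sum_4 mat_def)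
    apply (simp add: forall_4 ghat_vals[OF p] Gi_def)
    using D E apply (simp add: field_simps)
    by (simp_all add: Dv_def Hv_def algebra_simps)
  have 2: "?N ** ?M = mat 1"
    unfolding vec_eq_iff matrix_matrix_mult_def
    apply (simp add: gv sum_4 mat_def)
    apply (simp add: forall_4 ghat_vals[OF p] Gi_def)
    using D E apply (simp add: field_simps)
    by (simp_all add: Dv_def Hv_def algebra_simps)
  have ex: "\<exists>X. ?M ** X = mat 1 \<and> X ** ?M = mat 1" using 1 2 by blast
  have X: "?M ** matrix_inv ?M = mat 1 \<and> matrix_inv ?M ** ?M = mat 1"
    unfolding matrix_inv_def using someI_ex[OF ex] .
  have "matrix_inv ?M = matrix_inv ?M ** (?M ** ?N)" using 1 by simp
  also have "\<dots> = ?N" using X by (simp add: matrix_mul_assoc)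
  finally show ?thesis unfolding ginv_def by simp
qed


definition "ll d p = pd d lam p"
definition "dG d i j p = pd d (ghat vh hh i j) p"

lemma diff_lam: "p \<in> Om \<Longrightarrow> lam differentiable (at p)"
  using smooth_lam unfolding smooth_on_def by (metis iter_pd.simps(1))
lemma diff_ghat: "p \<in> Om \<Longrightarrow> ghat vh hh i j differentiable (at p)"
  using smooth_ghat unfolding smooth_on_def by (metis iter_pd.simps(1))

lemma pd_gconf: assumes p: "p \<in> Om"
  shows "pd d (gconf lam vh hh i j) p = EE p * (2 * ll d p * ghat vh hh i j p + dG d i j p)"
proof -
  have L: "((\<lambda>t. lam (p + t *\<^sub>R axis d 1)) has_real_derivative ll d p) (at 0)"
    using line_has_deriv[OF diff_lam[OF p]] by (simp add: ll_def)
  have G: "((\<lambda>t. ghat vh hh i j (p + t *\<^sub>R axis d 1)) has_real_derivative dG d i j p) (at 0)"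
    using line_has_deriv[OF diff_ghat[OF p]] by (simp add: dG_def)
  have "((\<lambda>t. exp (2 * lam (p + t *\<^sub>R axis d 1)) * ghat vh hh i j (p + t *\<^sub>R axis d 1)) has_real_derivative
      exp (2 * lam (p + 0 *\<^sub>R axis d 1)) * (2 * ll d p) * ghat vh hh i j (p + 0 *\<^sub>R axis d 1) +
      exp (2 * lam (p + 0 *\<^sub>R axis d 1)) * dG d i j p) (at 0)"
    by (rule derivative_eq_intros L G refl | simp)+
  then show ?thesis
    unfolding gconf_def EE_def by (intro pd_eqI) (simp add: algebra_simps)
qed

lemma axis_comp: "(x + t *\<^sub>R axis d (1::real)) $ k = (if k = d then x $ k + t else x $ k)"
  by (simp add: axis_def)

lemma dG_zero: "\<not> (tl i \<and> tl j) \<Longrightarrow> \<not> (sp i \<and> sp j) \<Longrightarrow> dG d i j p = 0"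
  unfolding dG_def by (rule pd_const_line[where c=0]) (auto simp: ghat_def)
lemma dG_tts: "sp d \<Longrightarrow> tl i \<Longrightarrow> tl j \<Longrightarrow> dG d i j p = 0"
  unfolding dG_def
  by (auto intro!: pd_const_line[where c="vh i j (p$1) (p$2)"] simp: ghat_def axis_def sp_def tl_def)
lemma dG_sst: "tl d \<Longrightarrow> sp i \<Longrightarrow> sp j \<Longrightarrow> dG d i j p = 0"
  unfolding dG_def
  by (auto intro!: pd_const_line[where c="hh i j (p$3) (p$4)"] simp: ghat_def axis_def sp_def tl_def)

lemma dG_21: "p \<in> Om \<Longrightarrow> dG d 2 1 p = dG d 1 2 p"
  unfolding dG_def by (rule pd_local[OF openOm]) (use vv21 in \<open>auto simp: ghat_def vv_def\<close>)
lemma dG_43: "p \<in> Om \<Longrightarrow> dG d 4 3 p = dG d 3 4 p"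
  unfolding dG_def by (rule pd_local[OF openOm]) (use hv43 in \<open>auto simp: ghat_def hv_def\<close>)

lemma christ_eq: assumes p: "p \<in> Om"
  shows "christ (gconf lam vh hh) a b c p = (\<Sum>d\<in>UNIV. Gi a d p * (2 * ll b p * ghat vh hh d c p + dG b d c p
     + 2 * ll c p * ghat vh hh d b p + dG c d b p - 2 * ll d p * ghat vh hh b c p - dG d b c p)) / 2"
  unfolding christ_def ginv_eq[OF p] pd_gconf[OF p]
  apply (intro arg_cong[where f="\<lambda>x. x / 2"] sum.cong refl)
  using EE_pos[of p] by (simp add: field_simps)


lemma vproj_eq: assumes q: "q \<in> Om"
  shows "vproj lam vh hh a b q = (if tl a \<and> a = b then 1 else 0)"
proof -
  have D: "Dv q \<noteq> 0" using Dv_neg[OF q] by auto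
  show ?thesis
  unfolding vproj_def raise1_def ginv_eq[OF q] vcov_def sum_4
  using four_cases[of a] four_cases[of b] EE_pos[of q] D
  apply (elim disjE) apply (simp_all add: Gi_def vv_def[symmetric] EE_def[symmetric] vv21[OF q] field_simps)
  by (simp_all add: Dv_def EE_def algebra_simps)
qed

lemma hproj_eq: assumes q: "q \<in> Om"
  shows "hproj lam vh hh a b q = (if sp a \<and> a = b then 1 else 0)"
proof -
  have D: "Hv q \<noteq> 0" using Hv_pos[OF q] by auto
  show ?thesis
  unfolding hproj_def raise1_def ginv_eq[OF q] hcov_def sum_4
  using four_cases[of a] four_cases[of b] EE_pos[of q] D
  apply (elim disjE) apply (simp_all add: Gi_def hv_def[symmetric] EE_def[symmetric] hv43[OF q] field_simps)
  by (simp_all add: Hv_def EE_def algebra_simps)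
qed

lemma sum_ind_l: "(\<Sum>b\<in>(UNIV::4 set). (if Q a \<and> a = b then 1 else 0) * F b) = (if Q a then F a else (0::real))"
  by (simp add: if_distrib[where f="\<lambda>x. x * _"] cong: if_cong)

lemma sum_ind: "(\<Sum>b\<in>(UNIV::4 set). f b * (if Q b \<and> b = \<alpha> then 1 else 0)) = (if Q \<alpha> then f \<alpha> else (0::real))"
proof -
  have "(\<Sum>b\<in>UNIV. f b * (if Q b \<and> b = \<alpha> then 1 else 0)) = (\<Sum>b\<in>UNIV. if b = \<alpha> then (if Q \<alpha> then f \<alpha> else 0) else 0)"
    by (rule sum.cong) auto
  also have "\<dots> = (if Q \<alpha> then f \<alpha> else 0)" by (simp add: sum.delta sum.delta')
  finally show ?thesis .
qed

lemma sum_ind2: "(\<Sum>b\<in>(UNIV::4 set). \<Sum>c\<in>(UNIV::4 set). f b c * ((if Q b \<and> b = \<alpha> then 1 else 0) * (if R c \<and> c = \<beta> then 1 else 0)))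
   = (if Q \<alpha> \<and> R \<beta> then f \<alpha> \<beta> else (0::real))"
proof -
  have "\<And>b. (\<Sum>c\<in>UNIV. f b c * ((if Q b \<and> b = \<alpha> then 1 else 0) * (if R c \<and> c = \<beta> then 1 else 0)))
      = (if R \<beta> then f b \<beta> * (if Q b \<and> b = \<alpha> then 1 else 0) else 0)"
    using sum_ind[of "\<lambda>c. f _ c * (if Q _ \<and> _ = \<alpha> then 1 else 0)" R \<beta>]
    by (simp add: mult.assoc mult.commute[of "if R _ \<and> _ = _ then _ else _"] mult.left_commute)
  then show ?thesis by (cases "R \<beta>") (simp_all add: sum_ind)
qed

lemma sum_axis: "(\<Sum>b\<in>UNIV. f b * (axis \<beta> (1::real) $ b)) = f \<beta>"
proof -
  have "(\<Sum>b\<in>UNIV. f b * (axis \<beta> (1::real) $ b)) = (\<Sum>b\<in>UNIV. if b = \<beta> then f \<beta> else 0)"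
    by (rule sum.cong) (auto simp: axis_def)
  then show ?thesis by simp
qed

lemma Qform_eq:
  assumes p: "p \<in> Om"
    and PP: "\<And>q a b. q \<in> Om \<Longrightarrow> P a b q = (if T a \<and> a = b then 1 else 0)"
    and RR: "\<And>q a b. q \<in> Om \<Longrightarrow> R a b q = (if S a \<and> a = b then 1 else 0)"
  shows "Qform (gconf lam vh hh) P R (coordf \<alpha>) (coordf \<beta>) p $ a =
     (if S a \<and> T \<alpha> \<and> T \<beta> then christ (gconf lam vh hh) a \<alpha> \<beta> p else 0)"
proof -
  have ap: "\<And>q c \<gamma>. app P (coordf \<gamma>) q $ c = P c \<gamma> q"
    by (simp add: app_def coordf_def sum_axis)
  have pd0: "\<And>b c. pd b (P c \<beta>) p = 0"
  proof -
    fix b c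
    have "pd b (P c \<beta>) p = pd b (\<lambda>q. (if T c \<and> c = \<beta> then 1 else 0)) p"
      by (rule pd_local[OF openOm p]) (simp add: ap PP)
    also have "\<dots> = 0" by (rule pd_const_line) simp
    finally show "pd b (P c \<beta>) p = 0" .
  qed
  have cv: "\<And>c. cov (gconf lam vh hh) (app P (coordf \<alpha>)) (app P (coordf \<beta>)) p $ c
      = (if T \<alpha> \<and> T \<beta> then christ (gconf lam vh hh) c \<alpha> \<beta> p else 0)"
    by (simp add: cov_def pd0 ap PP[OF p] sum_ind2 mult.assoc)
  show ?thesis
    unfolding Qform_def app_def vec_lambda_beta RR[OF p] sum_ind_l
    by (simp add: app_def[symmetric] cv)
qed


lemma lin2: fixes a b c d x y :: real
  assumes "a * x + b * y = 0" "c * x + d * y = 0" "a * d - b * c \<noteq> 0"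
  shows "x = 0 \<and> y = 0"
proof -
  have "(a * d - b * c) * x = d * (a * x + b * y) - b * (c * x + d * y)" by (simp add: algebra_simps)
  then have "(a * d - b * c) * x = 0" using assms(1,2) by simp
  moreover have "(a * d - b * c) * y = a * (c * x + d * y) - c * (a * x + b * y)" by (simp add: algebra_simps)
  then have "(a * d - b * c) * y = 0" using assms(1,2) by simp
  ultimately show ?thesis using assms(3) by simp
qed

end

context P8 begin

lemma Gi_blk: "\<not> (tl i \<and> tl j) \<Longrightarrow> \<not> (sp i \<and> sp j) \<Longrightarrow> Gi i j p = 0"
  using four_cases[of i] four_cases[of j] by (elim disjE) (simp_all add: Gi_def)

lemma christ_stt: assumes p: "p \<in> Om" and "sp a" "tl b" "tl c"
  shows "christ (gconf lam vh hh) a b c p = - ghat vh hh b c p * (Gi a 3 p * ll 3 p + Gi a 4 p * ll 4 p)"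
proof -
  have a: "a = 3 \<or> a = 4" and b: "b = 1 \<or> b = 2" and c: "c = 1 \<or> c = 2"
    using assms by (auto simp: sp_def tl_def)
  show ?thesis
  unfolding christ_eq[OF p] sum_4
  using a b c
  by (elim disjE) (simp_all add: Gi_blk ghat_vals[OF p] dG_zero dG_tts field_simps)
qed

lemma christ_tss: assumes p: "p \<in> Om" and "tl a" "sp b" "sp c"
  shows "christ (gconf lam vh hh) a b c p = - ghat vh hh b c p * (Gi a 1 p * ll 1 p + Gi a 2 p * ll 2 p)"
proof -
  have a: "a = 1 \<or> a = 2" and b: "b = 3 \<or> b = 4" and c: "c = 3 \<or> c = 4"
    using assms by (auto simp: sp_def tl_def)
  show ?thesis
  unfolding christ_eq[OF p] sum_4
  using a b c
  by (elim disjE) (simp_all add: Gi_blk ghat_vals[OF p] dG_zero dG_sst field_simps)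
qed

lemma Gi_sym: "Gi 2 1 p = Gi 1 2 p" "Gi 4 3 p = Gi 3 4 p" by (simp_all add: Gi_def)

lemma Gi_tr_v: assumes p: "p \<in> Om" shows "Gi 1 1 p * vv 1 1 p + 2 * Gi 1 2 p * vv 1 2 p + Gi 2 2 p * vv 2 2 p = 2"
proof -
  have "Dv p \<noteq> 0" using Dv_neg[OF p] by simp
  then show ?thesis apply (simp add: Gi_def field_simps) by (simp add: Dv_def algebra_simps)
qed
lemma Gi_tr_h: assumes p: "p \<in> Om" shows "Gi 3 3 p * hv 3 3 p + 2 * Gi 3 4 p * hv 3 4 p + Gi 4 4 p * hv 4 4 p = 2"
proof -
  have "Hv p \<noteq> 0" using Hv_pos[OF p] by simp
  then show ?thesis apply (simp add: Gi_def field_simps) by (simp add: Hv_def algebra_simps)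
qed

lemma trS_v: assumes p: "p \<in> Om"
  shows "trS (gconf lam vh hh) (vproj lam vh hh) (hproj lam vh hh) p $ a =
     (if sp a then -(2 / EE p) * (Gi a 3 p * ll 3 p + Gi a 4 p * ll 4 p) else 0)"
proof -
  have E: "EE p \<noteq> 0" using EE_pos[of p] by auto
  have Q: "\<And>\<alpha> \<beta> a. Qform (gconf lam vh hh) (vproj lam vh hh) (hproj lam vh hh) (coordf \<alpha>) (coordf \<beta>) p $ a =
     (if sp a \<and> tl \<alpha> \<and> tl \<beta> then christ (gconf lam vh hh) a \<alpha> \<beta> p else 0)"
    by (rule Qform_eq[OF p]) (simp_all add: vproj_eq hproj_eq)
  show ?thesis
  proof (cases "sp a")
    case True
    define X where "X = Gi a 3 p * ll 3 p + Gi a 4 p * ll 4 p"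
    have "trS (gconf lam vh hh) (vproj lam vh hh) (hproj lam vh hh) p $ a
       = - (X / EE p) * (Gi 1 1 p * vv 1 1 p + 2 * Gi 1 2 p * vv 1 2 p + Gi 2 2 p * vv 2 2 p)"
      unfolding trS_def sum_component vector_scaleR_component Sform_def vector_add_component Q ginv_eq[OF p] sum_4
      using True E apply (simp add: christ_stt[OF p] ghat_vals[OF p] Gi_sym field_simps)
      by (simp add: X_def algebra_simps)
    then show ?thesis using True Gi_tr_v[OF p] by (simp add: X_def)
  next
    case False
    then show ?thesis
      unfolding trS_def sum_component vector_scaleR_component Sform_def vector_add_component Q by simp
  qed
qed

lemma trS_h: assumes p: "p \<in> Om"
  shows "trS (gconf lam vh hh) (hproj lam vh hh) (vproj lam vh hh) p $ a =
     (if tl a then -(2 / EE p) * (Gi a 1 p * ll 1 p + Gi a 2 p * ll 2 p) else 0)"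
proof -
  have E: "EE p \<noteq> 0" using EE_pos[of p] by auto
  have Q: "\<And>\<alpha> \<beta> a. Qform (gconf lam vh hh) (hproj lam vh hh) (vproj lam vh hh) (coordf \<alpha>) (coordf \<beta>) p $ a =
     (if tl a \<and> sp \<alpha> \<and> sp \<beta> then christ (gconf lam vh hh) a \<alpha> \<beta> p else 0)"
    by (rule Qform_eq[OF p]) (simp_all add: vproj_eq hproj_eq)
  show ?thesis
  proof (cases "tl a")
    case True
    define X where "X = Gi a 1 p * ll 1 p + Gi a 2 p * ll 2 p"
    have "trS (gconf lam vh hh) (hproj lam vh hh) (vproj lam vh hh) p $ a
       = - (X / EE p) * (Gi 3 3 p * hv 3 3 p + 2 * Gi 3 4 p * hv 3 4 p + Gi 4 4 p * hv 4 4 p)"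
      unfolding trS_def sum_component vector_scaleR_component Sform_def vector_add_component Q ginv_eq[OF p] sum_4
      using True E apply (simp add: christ_tss[OF p] ghat_vals[OF p] Gi_sym field_simps)
      by (simp add: X_def algebra_simps)
    then show ?thesis using True Gi_tr_h[OF p] by (simp add: X_def)
  next
    case False
    then show ?thesis
      unfolding trS_def sum_component vector_scaleR_component Sform_def vector_add_component Q by simp
  qed
qed

end

context P8 begin

definition "Sv q = sqrt (- Dv q)"
definition Nv :: "4 \<Rightarrow> 4 \<Rightarrow> real^4 \<Rightarrow> real" where
  "Nv a b q = (if a = 1 \<and> b = 1 then - vv 1 2 q else if a = 1 \<and> b = 2 then - vv 2 2 q
     else if a = 2 \<and> b = 1 then vv 1 1 q else if a = 2 \<and> b = 2 then vv 1 2 q else 0)"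

lemma Sv_pos: "q \<in> Om \<Longrightarrow> Sv q > 0" using Dv_neg[of q] by (simp add: Sv_def)
lemma Sv_sq: "q \<in> Om \<Longrightarrow> Dv q = - (Sv q * Sv q)"
  using Dv_neg[of q] by (simp add: Sv_def)

lemma s_eq: assumes q: "q \<in> Om"
  shows "sqrt \<bar>vcov lam vh 1 1 q * vcov lam vh 2 2 q - vcov lam vh 1 2 q * vcov lam vh 2 1 q\<bar> = EE q * Sv q"
proof -
  have "vcov lam vh 1 1 q * vcov lam vh 2 2 q - vcov lam vh 1 2 q * vcov lam vh 2 1 q = (EE q)^2 * Dv q"
    by (simp add: vcov_def EE_def vv_def[symmetric] vv21[OF q] Dv_def power2_eq_square algebra_simps)
  also have "\<bar>\<dots>\<bar> = (EE q)^2 * (- Dv q)" using Dv_neg[OF q] by (simp add: abs_mult)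
  finally have "sqrt \<bar>vcov lam vh 1 1 q * vcov lam vh 2 2 q - vcov lam vh 1 2 q * vcov lam vh 2 1 q\<bar>
     = sqrt ((EE q)^2) * sqrt (- Dv q)" by (simp only: real_sqrt_mult)
  then show ?thesis using EE_pos[of q] by (simp add: Sv_def)
qed

lemma Umix_eq: assumes q: "q \<in> Om"
  shows "Umix lam vh hh a b q = Nv a b q / Sv q"
proof -
  have S: "Sv q \<noteq> 0" using Sv_pos[OF q] by simp
  have E: "EE q \<noteq> 0" using EE_pos[of q] by simp
  show ?thesis
  unfolding Umix_def raise1_def ginv_eq[OF q] Ucov_def Let_def s_eq[OF q] sum_4
  using four_cases[of a] four_cases[of b] S E
  by (elim disjE) (simp_all add: Gi_def Nv_def Sv_sq[OF q] field_simps)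
qed


definition dNv :: "4 \<Rightarrow> 4 \<Rightarrow> 4 \<Rightarrow> real^4 \<Rightarrow> real" where
  "dNv d a b p = (if a = 1 \<and> b = 1 then - dG d 1 2 p else if a = 1 \<and> b = 2 then - dG d 2 2 p
     else if a = 2 \<and> b = 1 then dG d 1 1 p else if a = 2 \<and> b = 2 then dG d 1 2 p else 0)"
definition "dDv d p = dG d 1 1 p * vv 2 2 p + vv 1 1 p * dG d 2 2 p - 2 * vv 1 2 p * dG d 1 2 p"

lemma vv_line: assumes p: "p \<in> Om" and "tl i" "tl j"
  shows "((\<lambda>t. vv i j (p + t *\<^sub>R axis d 1)) has_real_derivative dG d i j p) (at 0)"
proof -
  have "(\<lambda>q. vv i j q) = ghat vh hh i j" using assms by (auto simp: vv_def ghat_def)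
  then show ?thesis using line_has_deriv[OF diff_ghat[OF p], of i j d] by (simp add: dG_def)
qed

lemma Nv_line: assumes p: "p \<in> Om"
  shows "((\<lambda>t. Nv a b (p + t *\<^sub>R axis d 1)) has_real_derivative dNv d a b p) (at 0)"
proof -
  note V = vv_line[OF p tl_simps(1) tl_simps(1), of d] vv_line[OF p tl_simps(1) tl_simps(2), of d] vv_line[OF p tl_simps(2) tl_simps(2), of d]
  show ?thesis
    using four_cases[of a] four_cases[of b]
    by (elim disjE) (simp_all add: Nv_def dNv_def V DERIV_minus)
qed

lemma Dv_line: assumes p: "p \<in> Om"
  shows "((\<lambda>t. Dv (p + t *\<^sub>R axis d 1)) has_real_derivative dDv d p) (at 0)"
proof -
  note V = vv_line[OF p tl_simps(1) tl_simps(1), of d] vv_line[OF p tl_simps(1) tl_simps(2), of d] vv_line[OF p tl_simps(2) tl_simps(2), of d]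
  show ?thesis unfolding Dv_def
    by (rule DERIV_cong[OF DERIV_diff[OF DERIV_mult[OF V(1) V(3)] DERIV_mult[OF V(2) V(2)]]])
       (simp add: dDv_def algebra_simps)
qed

lemma Sv_line: assumes p: "p \<in> Om"
  shows "((\<lambda>t. Sv (p + t *\<^sub>R axis d 1)) has_real_derivative (- dDv d p / (2 * Sv p))) (at 0)"
proof -
  have pos: "0 < - Dv (p + 0 *\<^sub>R axis d 1)" using Dv_neg[OF p] by simp
  have "((\<lambda>t. sqrt (- Dv (p + t *\<^sub>R axis d 1))) has_real_derivative
      inverse (sqrt (- Dv (p + 0 *\<^sub>R axis d 1))) / 2 * (- dDv d p)) (at 0)"
    using DERIV_chain2[OF DERIV_real_sqrt[OF pos] DERIV_minus[OF Dv_line[OF p]]] by (simp add: o_def)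
  then show ?thesis by (simp add: Sv_def field_simps)
qed

lemma pd_NS: assumes p: "p \<in> Om"
  shows "pd d (\<lambda>q. Nv a b q / Sv q) p = (dNv d a b p - Nv a b p * dDv d p / (2 * Dv p)) / Sv p"
proof -
  have S: "Sv p \<noteq> 0" using Sv_pos[OF p] by simp
  have "((\<lambda>t. Nv a b (p + t *\<^sub>R axis d 1) / Sv (p + t *\<^sub>R axis d 1)) has_real_derivative
     (dNv d a b p * Sv (p + 0 *\<^sub>R axis d 1) - Nv a b (p + 0 *\<^sub>R axis d 1) * (- dDv d p / (2 * Sv p)))
       / (Sv (p + 0 *\<^sub>R axis d 1) * Sv (p + 0 *\<^sub>R axis d 1))) (at 0)"
    by (rule DERIV_divide[OF Nv_line[OF p] Sv_line[OF p]]) (use S in simp)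
  then have "pd d (\<lambda>q. Nv a b q / Sv q) p = (dNv d a b p * Sv p - Nv a b p * (- dDv d p / (2 * Sv p))) / (Sv p * Sv p)"
    by (intro pd_eqI) simp
  also have "\<dots> = (dNv d a b p - Nv a b p * dDv d p / (2 * Dv p)) / Sv p"
    using S Dv_neg[OF p] by (simp add: Sv_sq[OF p] field_simps)
  finally show ?thesis .
qed

lemma pd_Umix: assumes p: "p \<in> Om"
  shows "pd d (Umix lam vh hh a b) p = (dNv d a b p - Nv a b p * dDv d p / (2 * Dv p)) / Sv p"
proof -
  have "pd d (Umix lam vh hh a b) p = pd d (\<lambda>q. Nv a b q / Sv q) p"
    by (rule pd_local[OF openOm p]) (simp add: Umix_eq)
  then show ?thesis using pd_NS[OF p] by simp
qed

end


lemma det_4: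
  "det (A::'a::comm_ring_1^4^4) =
    A$1$1 * A$2$2 * A$3$3 * A$4$4 - A$1$1 * A$2$2 * A$3$4 * A$4$3
  - A$1$1 * A$2$3 * A$3$2 * A$4$4 + A$1$1 * A$2$3 * A$3$4 * A$4$2
  + A$1$1 * A$2$4 * A$3$2 * A$4$3 - A$1$1 * A$2$4 * A$3$3 * A$4$2
  - A$1$2 * A$2$1 * A$3$3 * A$4$4 + A$1$2 * A$2$1 * A$3$4 * A$4$3
  + A$1$2 * A$2$3 * A$3$1 * A$4$4 - A$1$2 * A$2$3 * A$3$4 * A$4$1
  - A$1$2 * A$2$4 * A$3$1 * A$4$3 + A$1$2 * A$2$4 * A$3$3 * A$4$1
  + A$1$3 * A$2$1 * A$3$2 * A$4$4 - A$1$3 * A$2$1 * A$3$4 * A$4$2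
  - A$1$3 * A$2$2 * A$3$1 * A$4$4 + A$1$3 * A$2$2 * A$3$4 * A$4$1
  + A$1$3 * A$2$4 * A$3$1 * A$4$2 - A$1$3 * A$2$4 * A$3$2 * A$4$1
  - A$1$4 * A$2$1 * A$3$2 * A$4$3 + A$1$4 * A$2$1 * A$3$3 * A$4$2
  + A$1$4 * A$2$2 * A$3$1 * A$4$3 - A$1$4 * A$2$2 * A$3$3 * A$4$1
  - A$1$4 * A$2$3 * A$3$1 * A$4$2 + A$1$4 * A$2$3 * A$3$2 * A$4$1"
proof -
  have f1: "finite {2::4, 3, 4}" "1 \<notin> {2::4, 3, 4}" by auto
  have f2: "finite {3::4, 4}" "2 \<notin> {3::4, 4}" by auto
  have f3: "finite {4::4}" "3 \<notin> {4::4}" by auto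
  show ?thesis
    unfolding det_def UNIV_4
    unfolding sum_over_permutations_insert[OF f1]
    unfolding sum_over_permutations_insert[OF f2]
    unfolding sum_over_permutations_insert[OF f3]
    unfolding permutes_sing
    by (simp add: sign_swap_id permutation_swap_id permutation_compose sign_compose sign_id swap_id_eq algebra_simps)
qed

context P8 begin

definition "Rh q = sqrt (Hv q)"
lemma Rh_pos: "q \<in> Om \<Longrightarrow> Rh q > 0" using Hv_pos[of q] by (simp add: Rh_def)
lemma Rh_sq: "q \<in> Om \<Longrightarrow> Hv q = Rh q * Rh q"
  using Hv_pos[of q] by (simp add: Rh_def)

lemma det_g: assumes p: "p \<in> Om"
  shows "sqrt \<bar>det (gmat (gconf lam vh hh) p)\<bar> = (EE p)^2 * Sv p * Rh p"
proof -
  have "det (gmat (gconf lam vh hh) p) = (EE p)^4 * Dv p * Hv p"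
    unfolding det_4 by (simp add: gmat_def gconf_def EE_def ghat_vals[OF p] Dv_def Hv_def algebra_simps power4_eq_xxxx)
  also have "\<bar>\<dots>\<bar> = ((EE p)^2)^2 * (- Dv p) * Hv p"
    using Dv_neg[OF p] Hv_pos[OF p] by (simp add: abs_mult power_mult[symmetric])
  finally have "sqrt \<bar>det (gmat (gconf lam vh hh) p)\<bar> = sqrt (((EE p)^2)^2) * sqrt (- Dv p) * sqrt (Hv p)"
    by (simp only: real_sqrt_mult)
  moreover have "sqrt ((EE p)^4) = (EE p)^2"
  proof -
    have "(EE p)^4 = ((EE p)^2)^2" by (simp flip: power_mult)
    then show ?thesis by (simp only: real_sqrt_abs) simp
  qed
  ultimately show ?thesis by (simp add: Sv_def Rh_def)
qed

lemma inner_U: assumes p: "p \<in> Om"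
  shows "(\<Sum>\<alpha>\<in>UNIV. \<Sum>\<beta>\<in>UNIV. ginv (gconf lam vh hh) \<mu> \<alpha> p * ginv (gconf lam vh hh) \<nu> \<beta> p * Ucov lam vh \<alpha> \<beta> p)
     = Sv p / EE p * (Gi \<mu> 1 p * Gi \<nu> 2 p - Gi \<mu> 2 p * Gi \<nu> 1 p)"
  unfolding ginv_eq[OF p] Ucov_def Let_def s_eq[OF p] sum_4
  using EE_pos[of p] by (simp add: field_simps power2_eq_square)

lemma Gi_det_v: "p \<in> Om \<Longrightarrow> Gi 1 1 p * Gi 2 2 p - Gi 1 2 p * Gi 2 1 p = 1 / Dv p"
  using Dv_neg[of p] by (simp add: Gi_def field_simps) (simp add: Dv_def algebra_simps)

lemma hodge_U: assumes p: "p \<in> Om"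
  shows "hodge (gconf lam vh hh) (Ucov lam vh) a b p = - EE p * Rh p * lcsym a b 1 2"
proof -
  have S: "Sv p \<noteq> 0" using Sv_pos[OF p] by simp
  have E: "EE p \<noteq> 0" using EE_pos[of p] by simp
  have GD: "Gi 1 1 p * Gi 2 2 p - Gi 1 2 p * Gi 2 1 p = - 1 / (Sv p * Sv p)"
    using Gi_det_v[OF p] Sv_sq[OF p] by simp
  have GDm: "1 + Sv p * Sv p * (Gi 1 1 p * Gi 2 2 p) = Sv p * Sv p * (Gi 1 2 p * Gi 1 2 p)"
    using GD S Gi_sym(1)[of p] by (simp add: field_simps)
  have key: "EE p * (EE p * Rh p) + EE p * (EE p * (Sv p * (Sv p * (Rh p * (Gi 1 1 p * Gi 2 2 p)))))
     = EE p * (EE p * (Sv p * (Sv p * (Rh p * (Gi 1 2 p * Gi 1 2 p)))))"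
  proof -
    have "EE p * (EE p * Rh p) + EE p * (EE p * (Sv p * (Sv p * (Rh p * (Gi 1 1 p * Gi 2 2 p)))))
      = EE p * EE p * Rh p * (1 + Sv p * Sv p * (Gi 1 1 p * Gi 2 2 p))" by (simp add: algebra_simps)
    also have "\<dots> = EE p * EE p * Rh p * (Sv p * Sv p * (Gi 1 2 p * Gi 1 2 p))" using GDm by simp
    finally show ?thesis by (simp add: algebra_simps)
  qed
  have GD': "Gi 1 2 p * Gi 1 2 p - Gi 2 2 p * Gi 1 1 p = 1 / (Sv p * Sv p)"
    using GD Gi_sym(1)[of p] by (simp add: algebra_simps)
  have "hodge (gconf lam vh hh) (Ucov lam vh) a b p =
    (\<Sum>\<mu>\<in>UNIV. \<Sum>\<nu>\<in>UNIV. (EE p)^2 * Sv p * Rh p * lcsym a b \<mu> \<nu> * (Sv p / EE p * (Gi \<mu> 1 p * Gi \<nu> 2 p - Gi \<mu> 2 p * Gi \<nu> 1 p))) / 2"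
    unfolding hodge_def vol_def det_g[OF p] inner_U[OF p] ..
  also have "\<dots> = - EE p * Rh p * lcsym a b 1 2"
    unfolding sum_4
    using four_cases[of a] four_cases[of b]
    apply (elim disjE)
    apply (simp_all add: lcsym_def ipos_def Gi_blk)
    using S E
    apply (simp_all add: Gi_sym GD')
    apply (simp_all add: field_simps power2_eq_square)
    using key by (simp_all add: ac_simps)
  finally show ?thesis .
qed


definition Nh :: "4 \<Rightarrow> 4 \<Rightarrow> real^4 \<Rightarrow> real" where
  "Nh a b q = (if a = 3 \<and> b = 3 then - hv 3 4 q else if a = 3 \<and> b = 4 then - hv 4 4 q
     else if a = 4 \<and> b = 3 then hv 3 3 q else if a = 4 \<and> b = 4 then hv 3 4 q else 0)"

lemma sUmix_eq: assumes q: "q \<in> Om"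
  shows "sUmix lam vh hh a b q = Nh a b q / Rh q"
proof -
  have S: "Rh q \<noteq> 0" using Rh_pos[OF q] by simp
  have E: "EE q \<noteq> 0" using EE_pos[of q] by simp
  show ?thesis
  unfolding sUmix_def raise1_def ginv_eq[OF q] hodge_U[OF q] sum_4
  using four_cases[of a] four_cases[of b] S E
  by (elim disjE) (simp_all add: Gi_def Nh_def lcsym_def ipos_def Rh_sq[OF q] field_simps)
qed

definition dNh :: "4 \<Rightarrow> 4 \<Rightarrow> 4 \<Rightarrow> real^4 \<Rightarrow> real" where
  "dNh d a b p = (if a = 3 \<and> b = 3 then - dG d 3 4 p else if a = 3 \<and> b = 4 then - dG d 4 4 p
     else if a = 4 \<and> b = 3 then dG d 3 3 p else if a = 4 \<and> b = 4 then dG d 3 4 p else 0)"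
definition "dHv d p = dG d 3 3 p * hv 4 4 p + hv 3 3 p * dG d 4 4 p - 2 * hv 3 4 p * dG d 3 4 p"

lemma hv_line: assumes p: "p \<in> Om" and "sp i" "sp j"
  shows "((\<lambda>t. hv i j (p + t *\<^sub>R axis d 1)) has_real_derivative dG d i j p) (at 0)"
proof -
  have "(\<lambda>q. hv i j q) = ghat vh hh i j" using assms by (auto simp: hv_def ghat_def tl_def sp_def)
  then show ?thesis using line_has_deriv[OF diff_ghat[OF p], of i j d] by (simp add: dG_def)
qed

lemma Nh_line: assumes p: "p \<in> Om"
  shows "((\<lambda>t. Nh a b (p + t *\<^sub>R axis d 1)) has_real_derivative dNh d a b p) (at 0)"
proof -
  note V = hv_line[OF p tl_simps(5) tl_simps(5), of d] hv_line[OF p tl_simps(5) tl_simps(6), of d] hv_line[OF p tl_simps(6) tl_simps(6), of d]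
  show ?thesis
    using four_cases[of a] four_cases[of b]
    by (elim disjE) (simp_all add: Nh_def dNh_def V DERIV_minus)
qed

lemma Hv_line: assumes p: "p \<in> Om"
  shows "((\<lambda>t. Hv (p + t *\<^sub>R axis d 1)) has_real_derivative dHv d p) (at 0)"
proof -
  note V = hv_line[OF p tl_simps(5) tl_simps(5), of d] hv_line[OF p tl_simps(5) tl_simps(6), of d] hv_line[OF p tl_simps(6) tl_simps(6), of d]
  show ?thesis unfolding Hv_def
    by (rule DERIV_cong[OF DERIV_diff[OF DERIV_mult[OF V(1) V(3)] DERIV_mult[OF V(2) V(2)]]])
       (simp add: dHv_def algebra_simps)
qed

lemma Rh_line: assumes p: "p \<in> Om"
  shows "((\<lambda>t. Rh (p + t *\<^sub>R axis d 1)) has_real_derivative (dHv d p / (2 * Rh p))) (at 0)"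
proof -
  have pos: "0 < Hv (p + 0 *\<^sub>R axis d 1)" using Hv_pos[OF p] by simp
  have "((\<lambda>t. sqrt (Hv (p + t *\<^sub>R axis d 1))) has_real_derivative
      inverse (sqrt (Hv (p + 0 *\<^sub>R axis d 1))) / 2 * dHv d p) (at 0)"
    using DERIV_chain2[OF DERIV_real_sqrt[OF pos] Hv_line[OF p]] by (simp add: o_def)
  then show ?thesis by (simp add: Rh_def field_simps)
qed

lemma pd_NR: assumes p: "p \<in> Om"
  shows "pd d (\<lambda>q. Nh a b q / Rh q) p = (dNh d a b p - Nh a b p * dHv d p / (2 * Hv p)) / Rh p"
proof -
  have S: "Rh p \<noteq> 0" using Rh_pos[OF p] by simp
  have "((\<lambda>t. Nh a b (p + t *\<^sub>R axis d 1) / Rh (p + t *\<^sub>R axis d 1)) has_real_derivative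
     (dNh d a b p * Rh (p + 0 *\<^sub>R axis d 1) - Nh a b (p + 0 *\<^sub>R axis d 1) * (dHv d p / (2 * Rh p)))
       / (Rh (p + 0 *\<^sub>R axis d 1) * Rh (p + 0 *\<^sub>R axis d 1))) (at 0)"
    by (rule DERIV_divide[OF Nh_line[OF p] Rh_line[OF p]]) (use S in simp)
  then have "pd d (\<lambda>q. Nh a b q / Rh q) p = (dNh d a b p * Rh p - Nh a b p * (dHv d p / (2 * Rh p))) / (Rh p * Rh p)"
    by (intro pd_eqI) simp
  also have "\<dots> = (dNh d a b p - Nh a b p * dHv d p / (2 * Hv p)) / Rh p"
    using S Hv_pos[OF p] by (simp add: Rh_sq[OF p] field_simps)
  finally show ?thesis .
qed

lemma pd_sUmix: assumes p: "p \<in> Om"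
  shows "pd d (sUmix lam vh hh a b) p = (dNh d a b p - Nh a b p * dHv d p / (2 * Hv p)) / Rh p"
proof -
  have "pd d (sUmix lam vh hh a b) p = pd d (\<lambda>q. Nh a b q / Rh q) p"
    by (rule pd_local[OF openOm p]) (simp add: sUmix_eq)
  then show ?thesis using pd_NR[OF p] by simp
qed

end

context P8 begin

definition "chv a b c p = (Gi a 1 p * (dG b 1 c p + dG c 1 b p - dG 1 b c p)
    + Gi a 2 p * (dG b 2 c p + dG c 2 b p - dG 2 b c p)) / 2"

lemma Gi_inv_v: assumes p: "p \<in> Om" and "tl a" "tl c"
  shows "Gi a 1 p * ghat vh hh 1 c p + Gi a 2 p * ghat vh hh 2 c p = (if a = c then 1 else 0)"
proof -
  have a: "a = 1 \<or> a = 2" and c: "c = 1 \<or> c = 2" using assms by (auto simp: tl_def)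
  have D: "Dv p \<noteq> 0" using Dv_neg[OF p] by simp
  show ?thesis using a c D
    by (elim disjE) ((simp add: Gi_def ghat_vals[OF p] field_simps), (simp add: Dv_def algebra_simps)?)+
qed

lemma christ_ttt: assumes p: "p \<in> Om" and "tl a" "tl b" "tl c"
  shows "christ (gconf lam vh hh) a b c p = chv a b c p + (if a = c then ll b p else 0)
     + (if a = b then ll c p else 0) - ghat vh hh b c p * (Gi a 1 p * ll 1 p + Gi a 2 p * ll 2 p)"
proof -
  have i1: "Gi a 1 p * ghat vh hh 1 c p + Gi a 2 p * ghat vh hh 2 c p = (if a = c then 1 else 0)"
    using Gi_inv_v[OF p] assms by simp
  have i2: "Gi a 1 p * ghat vh hh 1 b p + Gi a 2 p * ghat vh hh 2 b p = (if a = b then 1 else 0)"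
    using Gi_inv_v[OF p] assms by simp
  have z: "Gi a 3 p = 0" "Gi a 4 p = 0" using assms(2) by (auto simp: Gi_def tl_def)
  have "christ (gconf lam vh hh) a b c p = chv a b c p
     + ll b p * (Gi a 1 p * ghat vh hh 1 c p + Gi a 2 p * ghat vh hh 2 c p)
     + ll c p * (Gi a 1 p * ghat vh hh 1 b p + Gi a 2 p * ghat vh hh 2 b p)
     - ghat vh hh b c p * (Gi a 1 p * ll 1 p + Gi a 2 p * ll 2 p)"
    unfolding christ_eq[OF p] sum_4 z chv_def by (simp add: field_simps)
  then show ?thesis unfolding i1 i2 by simp
qed

lemma christ_sse: assumes p: "p \<in> Om" and "sp a" "tl e"
  shows "christ (gconf lam vh hh) a a e p = ll e p * (Gi a 3 p * ghat vh hh 3 a p + Gi a 4 p * ghat vh hh 4 a p)"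
proof -
  have a: "a = 3 \<or> a = 4" and e: "e = 1 \<or> e = 2" using assms by (auto simp: tl_def sp_def)
  show ?thesis unfolding christ_eq[OF p] sum_4 using a e
    by (elim disjE) (simp_all add: Gi_blk ghat_vals[OF p] dG_zero dG_sst field_simps)
qed

lemma christ_sse_sum: assumes p: "p \<in> Om" and "tl e"
  shows "christ (gconf lam vh hh) 3 3 e p + christ (gconf lam vh hh) 4 4 e p = 2 * ll e p"
proof -
  have "christ (gconf lam vh hh) 3 3 e p + christ (gconf lam vh hh) 4 4 e p
     = ll e p * (Gi 3 3 p * hv 3 3 p + 2 * Gi 3 4 p * hv 3 4 p + Gi 4 4 p * hv 4 4 p)"
    unfolding christ_sse[OF p tl_simps(5) assms(2)] christ_sse[OF p tl_simps(6) assms(2)]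
    by (simp add: ghat_vals[OF p] Gi_sym algebra_simps)
  then show ?thesis using Gi_tr_h[OF p] by simp
qed

end

context P8 begin

abbreviation "gg \<equiv> gconf lam vh hh"

lemma divT_U_A: assumes p: "p \<in> Om" and c: "tl c"
  shows "divT gg (Umix lam vh hh) c p =
   ((dNv 1 1 c p - Nv 1 c p * dDv 1 p / (2 * Dv p)) + (dNv 2 2 c p - Nv 2 c p * dDv 2 p / (2 * Dv p))
    + (christ gg 1 1 1 p + christ gg 2 2 1 p + (christ gg 3 3 1 p + christ gg 4 4 1 p)) * Nv 1 c p
    + (christ gg 1 1 2 p + christ gg 2 2 2 p + (christ gg 3 3 2 p + christ gg 4 4 2 p)) * Nv 2 c p
    - (christ gg 1 1 c p * Nv 1 1 p + christ gg 2 1 c p * Nv 1 2 p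
       + christ gg 1 2 c p * Nv 2 1 p + christ gg 2 2 c p * Nv 2 2 p)) / Sv p"
proof -
  have cc: "c = 1 \<or> c = 2" using c by (auto simp: tl_def)
  have S: "Sv p \<noteq> 0" using Sv_pos[OF p] by simp
  show ?thesis
    unfolding divT_def pd_Umix[OF p] Umix_eq[OF p] sum_4
    using cc S by (elim disjE) (simp_all add: Nv_def dNv_def field_simps)
qed


lemma divT_U: assumes p: "p \<in> Om" and c: "tl c"
  shows "divT gg (Umix lam vh hh) c p = 2 * (ll 1 p * Nv 1 c p + ll 2 p * Nv 2 c p) / Sv p"
proof -
  have cc: "c = 1 \<or> c = 2" using c by (auto simp: tl_def)
  have D: "Dv p \<noteq> 0" using Dv_neg[OF p] by simp
  have num: "(dNv 1 1 c p - Nv 1 c p * dDv 1 p / (2 * Dv p)) + (dNv 2 2 c p - Nv 2 c p * dDv 2 p / (2 * Dv p))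
    + (christ gg 1 1 1 p + christ gg 2 2 1 p + 2 * ll 1 p) * Nv 1 c p
    + (christ gg 1 1 2 p + christ gg 2 2 2 p + 2 * ll 2 p) * Nv 2 c p
    - (christ gg 1 1 c p * Nv 1 1 p + christ gg 2 1 c p * Nv 1 2 p
       + christ gg 1 2 c p * Nv 2 1 p + christ gg 2 2 c p * Nv 2 2 p)
    = 2 * (ll 1 p * Nv 1 c p + ll 2 p * Nv 2 c p)"
    using cc D
    apply (elim disjE)
     apply (simp_all add: christ_ttt[OF p] chv_def Gi_def ghat_vals[OF p] Nv_def dNv_def dDv_def dG_21[OF p])
     apply (simp_all add: field_simps)
     apply (simp_all add: Dv_def algebra_simps)
    done
  show ?thesis
    unfolding divT_U_A[OF p c] christ_sse_sum[OF p tl_simps(1)] christ_sse_sum[OF p tl_simps(2)] num ..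
qed

end

context P8 begin


definition "chh a b c p = (Gi a 3 p * (dG b 3 c p + dG c 3 b p - dG 3 b c p)
    + Gi a 4 p * (dG b 4 c p + dG c 4 b p - dG 4 b c p)) / 2"

lemma Gi_inv_h: assumes p: "p \<in> Om" and "sp a" "sp c"
  shows "Gi a 3 p * ghat vh hh 3 c p + Gi a 4 p * ghat vh hh 4 c p = (if a = c then 1 else 0)"
proof -
  have a: "a = 3 \<or> a = 4" and c: "c = 3 \<or> c = 4" using assms by (auto simp: sp_def)
  have D: "Hv p \<noteq> 0" using Hv_pos[OF p] by simp
  show ?thesis using a c D
    by (elim disjE) ((simp add: Gi_def ghat_vals[OF p] field_simps), (simp add: Hv_def algebra_simps)?)+
qed

lemma christ_sss: assumes p: "p \<in> Om" and "sp a" "sp b" "sp c"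
  shows "christ gg a b c p = chh a b c p + (if a = c then ll b p else 0)
     + (if a = b then ll c p else 0) - ghat vh hh b c p * (Gi a 3 p * ll 3 p + Gi a 4 p * ll 4 p)"
proof -
  have i1: "Gi a 3 p * ghat vh hh 3 c p + Gi a 4 p * ghat vh hh 4 c p = (if a = c then 1 else 0)"
    using Gi_inv_h[OF p] assms by simp
  have i2: "Gi a 3 p * ghat vh hh 3 b p + Gi a 4 p * ghat vh hh 4 b p = (if a = b then 1 else 0)"
    using Gi_inv_h[OF p] assms by simp
  have z: "Gi a 1 p = 0" "Gi a 2 p = 0" using assms(2) by (auto simp: Gi_def sp_def)
  have "christ gg a b c p = chh a b c p
     + ll b p * (Gi a 3 p * ghat vh hh 3 c p + Gi a 4 p * ghat vh hh 4 c p)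
     + ll c p * (Gi a 3 p * ghat vh hh 3 b p + Gi a 4 p * ghat vh hh 4 b p)
     - ghat vh hh b c p * (Gi a 3 p * ll 3 p + Gi a 4 p * ll 4 p)"
    unfolding christ_eq[OF p] sum_4 z chh_def by (simp add: field_simps)
  then show ?thesis unfolding i1 i2 by simp
qed

lemma christ_tte: assumes p: "p \<in> Om" and "tl a" "sp e"
  shows "christ gg a a e p = ll e p * (Gi a 1 p * ghat vh hh 1 a p + Gi a 2 p * ghat vh hh 2 a p)"
proof -
  have a: "a = 1 \<or> a = 2" and e: "e = 3 \<or> e = 4" using assms by (auto simp: tl_def sp_def)
  show ?thesis unfolding christ_eq[OF p] sum_4 using a e
    by (elim disjE) (simp_all add: Gi_blk ghat_vals[OF p] dG_zero dG_tts field_simps)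
qed

lemma christ_tte_sum: assumes p: "p \<in> Om" and "sp e"
  shows "christ gg 1 1 e p + christ gg 2 2 e p = 2 * ll e p"
proof -
  have "christ gg 1 1 e p + christ gg 2 2 e p
     = ll e p * (Gi 1 1 p * vv 1 1 p + 2 * Gi 1 2 p * vv 1 2 p + Gi 2 2 p * vv 2 2 p)"
    unfolding christ_tte[OF p tl_simps(1) assms(2)] christ_tte[OF p tl_simps(2) assms(2)]
    by (simp add: ghat_vals[OF p] Gi_sym algebra_simps)
  then show ?thesis using Gi_tr_v[OF p] by simp
qed

lemma divT_sU_A: assumes p: "p \<in> Om" and c: "sp c"
  shows "divT gg (sUmix lam vh hh) c p =
   ((dNh 3 3 c p - Nh 3 c p * dHv 3 p / (2 * Hv p)) + (dNh 4 4 c p - Nh 4 c p * dHv 4 p / (2 * Hv p))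
    + (christ gg 3 3 3 p + christ gg 4 4 3 p + (christ gg 1 1 3 p + christ gg 2 2 3 p)) * Nh 3 c p
    + (christ gg 3 3 4 p + christ gg 4 4 4 p + (christ gg 1 1 4 p + christ gg 2 2 4 p)) * Nh 4 c p
    - (christ gg 3 3 c p * Nh 3 3 p + christ gg 4 3 c p * Nh 3 4 p
       + christ gg 3 4 c p * Nh 4 3 p + christ gg 4 4 c p * Nh 4 4 p)) / Rh p"
proof -
  have cc: "c = 3 \<or> c = 4" using c by (auto simp: sp_def)
  have S: "Rh p \<noteq> 0" using Rh_pos[OF p] by simp
  show ?thesis
    unfolding divT_def pd_sUmix[OF p] sUmix_eq[OF p] sum_4
    using cc S by (elim disjE) (simp_all add: Nh_def dNh_def field_simps)
qed

lemma divT_sU: assumes p: "p \<in> Om" and c: "sp c"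
  shows "divT gg (sUmix lam vh hh) c p = 2 * (ll 3 p * Nh 3 c p + ll 4 p * Nh 4 c p) / Rh p"
proof -
  have cc: "c = 3 \<or> c = 4" using c by (auto simp: sp_def)
  have D: "Hv p \<noteq> 0" using Hv_pos[OF p] by simp
  have num: "(dNh 3 3 c p - Nh 3 c p * dHv 3 p / (2 * Hv p)) + (dNh 4 4 c p - Nh 4 c p * dHv 4 p / (2 * Hv p))
    + (christ gg 3 3 3 p + christ gg 4 4 3 p + 2 * ll 3 p) * Nh 3 c p
    + (christ gg 3 3 4 p + christ gg 4 4 4 p + 2 * ll 4 p) * Nh 4 c p
    - (christ gg 3 3 c p * Nh 3 3 p + christ gg 4 3 c p * Nh 3 4 p
       + christ gg 3 4 c p * Nh 4 3 p + christ gg 4 4 c p * Nh 4 4 p)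
    = 2 * (ll 3 p * Nh 3 c p + ll 4 p * Nh 4 c p)"
    using cc D
    apply (elim disjE)
     apply (simp_all add: christ_sss[OF p] chh_def Gi_def ghat_vals[OF p] Nh_def dNh_def dHv_def dG_43[OF p])
     apply (simp_all add: field_simps)
     apply (simp_all add: Hv_def algebra_simps)
    done
  show ?thesis
    unfolding divT_sU_A[OF p c] christ_tte_sum[OF p tl_simps(5)] christ_tte_sum[OF p tl_simps(6)] num ..
qed

end


lemma lin2_iff: fixes a b c d x y :: real
  assumes h: "a * d - b * c \<noteq> 0"
  shows "(a * x + b * y = 0 \<and> c * x + d * y = 0) \<longleftrightarrow> (x = 0 \<and> y = 0)"
proof
  assume a: "a * x + b * y = 0 \<and> c * x + d * y = 0"
  have "(a * d - b * c) * x = d * (a * x + b * y) - b * (c * x + d * y)" by (simp add: algebra_simps)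
  then have 1: "(a * d - b * c) * x = 0" using a by simp
  have "(a * d - b * c) * y = a * (c * x + d * y) - c * (a * x + b * y)" by (simp add: algebra_simps)
  then have 2: "(a * d - b * c) * y = 0" using a by simp
  show "x = 0 \<and> y = 0" using 1 2 h by simp
qed simp

context P8 begin

lemma appc_U: assumes p: "p \<in> Om"
  shows "appc gg (Umix lam vh hh) w p $ a =
    (if a = 1 then - w 2 p / (EE p * Sv p) else if a = 2 then w 1 p / (EE p * Sv p) else 0)"
proof -
  have S: "Sv p \<noteq> 0" using Sv_pos[OF p] by simp
  have E: "EE p \<noteq> 0" using EE_pos[of p] by simp
  show ?thesis
    unfolding appc_def vec_lambda_beta Umix_eq[OF p] ginv_eq[OF p] sum_4
    using four_cases[of a] S E Dv_neg[OF p]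
    apply (elim disjE) apply (simp_all add: Nv_def Gi_def field_simps)
    by (simp_all add: Dv_def algebra_simps)
qed

lemma appc_sU: assumes p: "p \<in> Om"
  shows "appc gg (sUmix lam vh hh) w p $ a =
    (if a = 3 then - w 4 p / (EE p * Rh p) else if a = 4 then w 3 p / (EE p * Rh p) else 0)"
proof -
  have S: "Rh p \<noteq> 0" using Rh_pos[OF p] by simp
  have E: "EE p \<noteq> 0" using EE_pos[of p] by simp
  show ?thesis
    unfolding appc_def vec_lambda_beta sUmix_eq[OF p] ginv_eq[OF p] sum_4
    using four_cases[of a] S E Hv_pos[OF p]
    apply (elim disjE) apply (simp_all add: Nh_def Gi_def field_simps)
    by (simp_all add: Hv_def algebra_simps)
qed

lemma Dv_ne: "p \<in> Om \<Longrightarrow> Dv p \<noteq> 0" using Dv_neg[of p] by simp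
lemma Hv_ne: "p \<in> Om \<Longrightarrow> Hv p \<noteq> 0" using Hv_pos[of p] by simp

lemma b_zero: assumes p: "p \<in> Om"
  shows "bfield lam vh hh p = 0 \<longleftrightarrow> (ll 1 p = 0 \<and> ll 2 p = 0)"
proof -
  have S: "Sv p \<noteq> 0" using Sv_pos[OF p] by simp
  have E: "EE p \<noteq> 0" using EE_pos[of p] by simp
  have "bfield lam vh hh p = 0 \<longleftrightarrow> ((- vv 1 2 p) * ll 1 p + vv 1 1 p * ll 2 p = 0 \<and> (- vv 2 2 p) * ll 1 p + vv 1 2 p * ll 2 p = 0)"
    using E S apply (simp add: vec_eq_iff forall_4 bfield_def appc_U[OF p] divT_U[OF p] Nv_def algebra_simps)
    by blast
  also have "\<dots> \<longleftrightarrow> (ll 1 p = 0 \<and> ll 2 p = 0)"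
    by (rule lin2_iff) (use Dv_ne[OF p] in \<open>simp add: Dv_def algebra_simps\<close>)
  finally show ?thesis .
qed

lemma a_zero: assumes p: "p \<in> Om"
  shows "afield lam vh hh p = 0 \<longleftrightarrow> (ll 3 p = 0 \<and> ll 4 p = 0)"
proof -
  have S: "Rh p \<noteq> 0" using Rh_pos[OF p] by simp
  have E: "EE p \<noteq> 0" using EE_pos[of p] by simp
  have "afield lam vh hh p = 0 \<longleftrightarrow> ((- hv 3 4 p) * ll 3 p + hv 3 3 p * ll 4 p = 0 \<and> (- hv 4 4 p) * ll 3 p + hv 3 4 p * ll 4 p = 0)"
    using E S apply (simp add: vec_eq_iff forall_4 afield_def appc_sU[OF p] divT_sU[OF p] Nh_def algebra_simps)
    by blast
  also have "\<dots> \<longleftrightarrow> (ll 3 p = 0 \<and> ll 4 p = 0)"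
    by (rule lin2_iff) (use Hv_ne[OF p] in \<open>simp add: Hv_def algebra_simps\<close>)
  finally show ?thesis .
qed

lemma Udl_zero: assumes p: "p \<in> Om"
  shows "U_dlam lam vh hh p = 0 \<longleftrightarrow> (ll 1 p = 0 \<and> ll 2 p = 0)"
proof -
  have S: "Sv p \<noteq> 0" using Sv_pos[OF p] by simp
  have E: "EE p \<noteq> 0" using EE_pos[of p] by simp
  show ?thesis using E S by (auto simp: vec_eq_iff forall_4 U_dlam_def appc_U[OF p] ll_def)
qed

lemma sUdl_zero: assumes p: "p \<in> Om"
  shows "sU_dlam lam vh hh p = 0 \<longleftrightarrow> (ll 3 p = 0 \<and> ll 4 p = 0)"
proof -
  have S: "Rh p \<noteq> 0" using Rh_pos[OF p] by simp
  have E: "EE p \<noteq> 0" using EE_pos[of p] by simp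
  show ?thesis using E S by (auto simp: vec_eq_iff forall_4 sU_dlam_def appc_sU[OF p] ll_def)
qed

lemma dl_zero: "dlam lam p = 0 \<longleftrightarrow> (ll 1 p = 0 \<and> ll 2 p = 0 \<and> ll 3 p = 0 \<and> ll 4 p = 0)"
  by (simp add: vec_eq_iff forall_4 dlam_def ll_def)

lemma trv_zero: assumes p: "p \<in> Om"
  shows "trS gg (vproj lam vh hh) (hproj lam vh hh) p = 0 \<longleftrightarrow> (ll 3 p = 0 \<and> ll 4 p = 0)"
proof -
  have E: "EE p \<noteq> 0" using EE_pos[of p] by simp
  have "trS gg (vproj lam vh hh) (hproj lam vh hh) p = 0 \<longleftrightarrow>
    (Gi 3 3 p * ll 3 p + Gi 3 4 p * ll 4 p = 0 \<and> Gi 3 4 p * ll 3 p + Gi 4 4 p * ll 4 p = 0)"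
    using E apply (simp add: vec_eq_iff forall_4 trS_v[OF p] Gi_sym) by auto
  also have "\<dots> \<longleftrightarrow> (ll 3 p = 0 \<and> ll 4 p = 0)"
  proof (rule lin2_iff)
    have "Gi 3 3 p * Gi 4 4 p - Gi 3 4 p * Gi 3 4 p = 1 / Hv p"
      using Hv_ne[OF p] by (simp add: Gi_def field_simps) (simp add: Hv_def algebra_simps)
    then show "Gi 3 3 p * Gi 4 4 p - Gi 3 4 p * Gi 3 4 p \<noteq> 0" using Hv_ne[OF p] by simp
  qed
  finally show ?thesis .
qed

lemma trh_zero: assumes p: "p \<in> Om"
  shows "trS gg (hproj lam vh hh) (vproj lam vh hh) p = 0 \<longleftrightarrow> (ll 1 p = 0 \<and> ll 2 p = 0)"
proof -
  have E: "EE p \<noteq> 0" using EE_pos[of p] by simp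
  have "trS gg (hproj lam vh hh) (vproj lam vh hh) p = 0 \<longleftrightarrow>
    (Gi 1 1 p * ll 1 p + Gi 1 2 p * ll 2 p = 0 \<and> Gi 1 2 p * ll 1 p + Gi 2 2 p * ll 2 p = 0)"
    using E apply (simp add: vec_eq_iff forall_4 trS_h[OF p] Gi_sym) by auto
  also have "\<dots> \<longleftrightarrow> (ll 1 p = 0 \<and> ll 2 p = 0)"
  proof (rule lin2_iff)
    have "Gi 1 1 p * Gi 2 2 p - Gi 1 2 p * Gi 1 2 p = 1 / Dv p"
      using Dv_ne[OF p] by (simp add: Gi_def field_simps) (simp add: Dv_def algebra_simps)
    then show "Gi 1 1 p * Gi 2 2 p - Gi 1 2 p * Gi 1 2 p \<noteq> 0" using Dv_ne[OF p] by simp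
  qed
  finally show ?thesis .
qed

lemma main:
  shows
    "(class00 Om lam vh hh \<longleftrightarrow> (\<forall>p\<in>Om. afield lam vh hh p = 0 \<and> bfield lam vh hh p = 0))
   \<and> (class00 Om lam vh hh \<longleftrightarrow> (\<forall>p\<in>Om. dlam lam p = 0))
   \<and> (class01 Om lam vh hh \<longleftrightarrow>
        (\<forall>p\<in>Om. afield lam vh hh p = 0) \<and> (\<exists>p\<in>Om. bfield lam vh hh p \<noteq> 0))
   \<and> (class01 Om lam vh hh \<longleftrightarrow>
        (\<exists>p\<in>Om. dlam lam p \<noteq> 0) \<and> (\<forall>p\<in>Om. sU_dlam lam vh hh p = 0))
   \<and> (class10 Om lam vh hh \<longleftrightarrow>
        (\<exists>p\<in>Om. afield lam vh hh p \<noteq> 0) \<and> (\<forall>p\<in>Om. bfield lam vh hh p = 0))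
   \<and> (class10 Om lam vh hh \<longleftrightarrow>
        (\<exists>p\<in>Om. dlam lam p \<noteq> 0) \<and> (\<forall>p\<in>Om. U_dlam lam vh hh p = 0))
   \<and> (class11 Om lam vh hh \<longleftrightarrow>
        (\<exists>p\<in>Om. afield lam vh hh p \<noteq> 0) \<and> (\<exists>p\<in>Om. bfield lam vh hh p \<noteq> 0))
   \<and> (class11 Om lam vh hh \<longleftrightarrow>
        (\<exists>p\<in>Om. U_dlam lam vh hh p \<noteq> 0) \<and> (\<exists>p\<in>Om. sU_dlam lam vh hh p \<noteq> 0))"
proof -
  have VM: "V_minimal Om lam vh hh \<longleftrightarrow> (\<forall>p\<in>Om. ll 3 p = 0 \<and> ll 4 p = 0)"
    unfolding V_minimal_def using trv_zero by auto
  have HM: "H_minimal Om lam vh hh \<longleftrightarrow> (\<forall>p\<in>Om. ll 1 p = 0 \<and> ll 2 p = 0)"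
    unfolding H_minimal_def using trh_zero by auto
  have A: "\<forall>p\<in>Om. afield lam vh hh p = 0 \<longleftrightarrow> (ll 3 p = 0 \<and> ll 4 p = 0)" using a_zero by auto
  have B: "\<forall>p\<in>Om. bfield lam vh hh p = 0 \<longleftrightarrow> (ll 1 p = 0 \<and> ll 2 p = 0)" using b_zero by auto
  have U: "\<forall>p\<in>Om. U_dlam lam vh hh p = 0 \<longleftrightarrow> (ll 1 p = 0 \<and> ll 2 p = 0)" using Udl_zero by auto
  have SU: "\<forall>p\<in>Om. sU_dlam lam vh hh p = 0 \<longleftrightarrow> (ll 3 p = 0 \<and> ll 4 p = 0)" using sUdl_zero by auto
  note L = dl_zero
  show ?thesis
    unfolding class00_def class01_def class10_def class11_def VM HM
    using A B U SU L by (intro conjI) (auto; meson)+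
qed

end

theorem proposition8:
  fixes A B :: "(real \<times> real) set"
    and lam :: "real^4 \<Rightarrow> real"
    and vh hh :: "4 \<Rightarrow> 4 \<Rightarrow> real \<Rightarrow> real \<Rightarrow> real"
    and Om :: "(real^4) set"
  assumes "open A" and "open B"
    and Om_def: "Om = {p. (p$1, p$2) \<in> A \<and> (p$3, p$4) \<in> B}"
    and vh_lor: "\<And>x y. (x, y) \<in> A \<Longrightarrow>
           vh 1 2 x y = vh 2 1 x y \<and> vh 1 1 x y * vh 2 2 x y - (vh 1 2 x y)^2 < 0"
    and hh_riem: "\<And>x y. (x, y) \<in> B \<Longrightarrow>
           hh 3 4 x y = hh 4 3 x y \<and> hh 3 3 x y > 0 \<and> hh 3 3 x y * hh 4 4 x y - (hh 3 4 x y)^2 > 0"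
    and smooth_ghat: "\<And>i j. smooth_on Om (ghat vh hh i j)"
    and smooth_lam: "smooth_on Om lam"
  shows
    "(class00 Om lam vh hh \<longleftrightarrow> (\<forall>p\<in>Om. afield lam vh hh p = 0 \<and> bfield lam vh hh p = 0))
   \<and> (class00 Om lam vh hh \<longleftrightarrow> (\<forall>p\<in>Om. dlam lam p = 0))
   \<and> (class01 Om lam vh hh \<longleftrightarrow>
        (\<forall>p\<in>Om. afield lam vh hh p = 0) \<and> (\<exists>p\<in>Om. bfield lam vh hh p \<noteq> 0))
   \<and> (class01 Om lam vh hh \<longleftrightarrow>
        (\<exists>p\<in>Om. dlam lam p \<noteq> 0) \<and> (\<forall>p\<in>Om. sU_dlam lam vh hh p = 0))
   \<and> (class10 Om lam vh hh \<longleftrightarrow>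
        (\<exists>p\<in>Om. afield lam vh hh p \<noteq> 0) \<and> (\<forall>p\<in>Om. bfield lam vh hh p = 0))
   \<and> (class10 Om lam vh hh \<longleftrightarrow>
        (\<exists>p\<in>Om. dlam lam p \<noteq> 0) \<and> (\<forall>p\<in>Om. U_dlam lam vh hh p = 0))
   \<and> (class11 Om lam vh hh \<longleftrightarrow>
        (\<exists>p\<in>Om. afield lam vh hh p \<noteq> 0) \<and> (\<exists>p\<in>Om. bfield lam vh hh p \<noteq> 0))
   \<and> (class11 Om lam vh hh \<longleftrightarrow>
        (\<exists>p\<in>Om. U_dlam lam vh hh p \<noteq> 0) \<and> (\<exists>p\<in>Om. sU_dlam lam vh hh p \<noteq> 0))"
proof -
  interpret P8 A B lam vh hh Om
    by (unfold_locales) (fact assms)+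
  show ?thesis by (rule main)
qed


end
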